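(* Let $F$ be the CDF of a probability measure on $\mathbb{R}$, and for $z\ge0$ define $G_z(x)=\max\{0,F(x)-z\}$ for $x<0$ and $G_z(x)=\min\{1,F(x)+z\}$ for $x\ge0$. Then there exists $z\ge0$ such that $G_z$ is the CDF of a measure in $\mathcal{L}$ that minimizes $\sup_{x\in\mathbb{R}}|F(x)-G(x)|$ over all CDFs $G$ of measures in $\mathcal{L}$.
   Context: $\epsilon>0$, $B>0$. $\mathcal{L}=\{\eta\in\mathcal{P}(\mathbb{R}):\mathbb{E}_\eta|X|^{1+\epsilon}\le B\}$, where $\mathcal{P}(\mathbb{R})$ is the set of Borel probability measures on $\mathbb{R}$. *)

theory Defs
  imports "HOL-Probability.Probability"
begin

definition moment_class :: "real \<Rightarrow> real \<Rightarrow> real measure set" where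
  "moment_class eps B = {\<eta>. real_distribution \<eta> \<and>
     (\<integral>\<^sup>+ x. ennreal (\<bar>x\<bar> powr (1 + eps)) \<partial>\<eta>) \<le> ennreal B}"

definition shiftG :: "(real \<Rightarrow> real) \<Rightarrow> real \<Rightarrow> real \<Rightarrow> real" where
  "shiftG F z x = (if x < 0 then max 0 (F x - z) else min 1 (F x + z))"

end

theory Submission
  imports Defs
begin

lemma powr_iff: assumes "(p::real) > 0" "0 \<le> s" shows "s < \<bar>x\<bar> powr p \<longleftrightarrow> s powr (1/p) < \<bar>x\<bar>"
proof
  assume "s < \<bar>x\<bar> powr p"
  then have "s powr (1/p) < (\<bar>x\<bar> powr p) powr (1/p)"
    using assms by (intro powr_less_mono2) auto
  also have "\<dots> = \<bar>x\<bar>" using assms by (simp add: powr_powr)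
  finally show "s powr (1/p) < \<bar>x\<bar>" .
next
  assume "s powr (1/p) < \<bar>x\<bar>"
  then have "(s powr (1/p)) powr p < \<bar>x\<bar> powr p"
    using assms by (intro powr_less_mono2) auto
  also have "(s powr (1/p)) powr p = s" using assms by (simp add: powr_powr)
  finally show "s < \<bar>x\<bar> powr p" .
qed

lemma layer_cake:
  assumes "prob_space M" "g \<in> borel_measurable M" "\<And>x. 0 \<le> g x"
  shows "(\<integral>\<^sup>+x. ennreal (g x) \<partial>M) =
    (\<integral>\<^sup>+s. ennreal (indicator {0..} s * measure M {x\<in>space M. s < g x}) \<partial>lborel)"
proof -
  interpret prob_space M by fact
  interpret pair_sigma_finite M lborel
    by (simp add: pair_sigma_finite.intro prob_space_imp_sigma_finite assms(1) lborel.sigma_finite_measure_axioms)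
  have 1: "ennreal (g x) = (\<integral>\<^sup>+s. indicator {0..<g x} s \<partial>lborel)" for x
    using assms(3)[of x] by simp
  have meas: "(\<lambda>(x, s). indicator {0..<g x} s :: ennreal) \<in> borel_measurable (M \<Otimes>\<^sub>M lborel)"
  proof -
    have "(\<lambda>(x, s). indicator {0..<g x} s :: ennreal) = (\<lambda>p. of_bool (0 \<le> snd p \<and> snd p < g (fst p)))"
      by (auto simp: fun_eq_iff indicator_def)
    also have "\<dots> \<in> borel_measurable (M \<Otimes>\<^sub>M lborel)"
      using assms(2) by measurable
    finally show ?thesis .
  qed
  have "(\<integral>\<^sup>+x. ennreal (g x) \<partial>M) = (\<integral>\<^sup>+x. (\<integral>\<^sup>+s. indicator {0..<g x} s \<partial>lborel) \<partial>M)"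
    using 1 by simp
  also have "\<dots> = (\<integral>\<^sup>+s. (\<integral>\<^sup>+x. indicator {0..<g x} s \<partial>M) \<partial>lborel)"
    using Fubini'[OF meas] by simp
  also have "\<dots> = (\<integral>\<^sup>+s. ennreal (indicator {0..} s * measure M {x\<in>space M. s < g x}) \<partial>lborel)"
  proof (rule nn_integral_cong)
    fix s :: real
    have "(\<integral>\<^sup>+x. indicator {0..<g x} s \<partial>M) = (\<integral>\<^sup>+x. indicator {0..} s * indicator {x\<in>space M. s < g x} x \<partial>M)"
      by (rule nn_integral_cong) (auto simp: indicator_def)
    also have "\<dots> = indicator {0..} s * emeasure M {x\<in>space M. s < g x}"
      using assms(2) by (intro nn_integral_cmult_indicator) measurable
    also have "\<dots> = ennreal (indicator {0..} s * measure M {x\<in>space M. s < g x})"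
      by (simp add: emeasure_eq_measure ennreal_mult indicator_def)
    finally show "(\<integral>\<^sup>+x. indicator {0..<g x} s \<partial>M) = ennreal (indicator {0..} s * measure M {x\<in>space M. s < g x})" .
  qed
  finally show ?thesis .
qed

definition "Tail \<eta> r = measure \<eta> {r<..} + measure \<eta> {..< -r}"

lemma moment_tail:
  assumes "real_distribution \<eta>" "(p::real) > 0"
  shows "(\<integral>\<^sup>+x. ennreal (\<bar>x\<bar> powr p) \<partial>\<eta>) =
    (\<integral>\<^sup>+s. ennreal (indicator {0..} s * Tail \<eta> (s powr (1/p))) \<partial>lborel)"
proof -
  interpret real_distribution \<eta> by fact
  have "(\<integral>\<^sup>+x. ennreal (\<bar>x\<bar> powr p) \<partial>\<eta>) =
    (\<integral>\<^sup>+s. ennreal (indicator {0..} s * measure \<eta> {x\<in>space \<eta>. s < \<bar>x\<bar> powr p}) \<partial>lborel)"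
    by (rule layer_cake) (auto simp: prob_space_axioms)
  also have "\<dots> = (\<integral>\<^sup>+s. ennreal (indicator {0..} s * Tail \<eta> (s powr (1/p))) \<partial>lborel)"
  proof (rule nn_integral_cong)
    fix s :: real
    show "ennreal (indicator {0..} s * measure \<eta> {x\<in>space \<eta>. s < \<bar>x\<bar> powr p}) =
          ennreal (indicator {0..} s * Tail \<eta> (s powr (1/p)))"
    proof (cases "0 \<le> s")
      case True
      define r where "r = s powr (1/p)"
      have r0: "0 \<le> r" unfolding r_def by simp
      have iff: "s < \<bar>x\<bar> powr p \<longleftrightarrow> r < \<bar>x\<bar>" for x
        unfolding r_def using powr_iff[OF assms(2) True] .
      have "{x\<in>space \<eta>. s < \<bar>x\<bar> powr p} = {r<..} \<union> {..< -r}"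
        using iff r0 by auto
      then have "measure \<eta> {x\<in>space \<eta>. s < \<bar>x\<bar> powr p} = Tail \<eta> r"
      proof -
        have "{r<..} \<inter> {..< -r} = {}" using r0 by auto
        then have "measure \<eta> ({r<..} \<union> {..< -r}) = measure \<eta> {r<..} + measure \<eta> {..< -r}"
          by (intro finite_measure_Union) auto
        then show ?thesis using \<open>{x\<in>space \<eta>. s < \<bar>x\<bar> powr p} = {r<..} \<union> {..< -r}\<close>
          unfolding Tail_def by simp
      qed
      then show ?thesis by (simp add: r_def)
    qed simp
  qed
  finally show ?thesis .
qed

lemma tail_shift:
  assumes "real_distribution \<nu>" "real_distribution \<mu>" "cdf \<nu> = shiftG (cdf \<mu>) z" "z \<ge> 0" "r \<ge> 0"
  shows "Tail \<nu> r = max 0 (1 - cdf \<mu> r - z) + max 0 (measure \<mu> {..< -r} - z)"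
proof -
  interpret N: real_distribution \<nu> by fact
  interpret M: real_distribution \<mu> by fact
  have 1: "measure \<nu> {r<..} = 1 - cdf \<nu> r"
    using N.prob_compl[of "{..r}"] by (simp add: cdf_def Compl_eq_Diff_UNIV[symmetric] flip: Compl_atMost)
  have "(cdf \<nu> \<longlongrightarrow> measure \<nu> {..< -r}) (at_left (-r))" by (rule N.cdf_at_left)
  moreover have "(cdf \<nu> \<longlongrightarrow> max 0 (measure \<mu> {..< -r} - z)) (at_left (-r))"
  proof -
    have "((\<lambda>x. max 0 (cdf \<mu> x - z)) \<longlongrightarrow> max 0 (measure \<mu> {..< -r} - z)) (at_left (-r))"
      by (intro tendsto_intros M.cdf_at_left)
    moreover have "eventually (\<lambda>x. max 0 (cdf \<mu> x - z) = cdf \<nu> x) (at_left (-r))"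
    proof (rule eventually_mono[OF eventually_at_left_real[of "-r - 1" "-r"]])
      fix x assume "x \<in> {-r - 1<..<-r}"
      then have "x < 0" using assms(5) by simp
      then show "max 0 (cdf \<mu> x - z) = cdf \<nu> x" unfolding assms(3) shiftG_def by simp
    qed simp
    ultimately show ?thesis by (rule tendsto_cong[THEN iffD1, rotated])
  qed
  ultimately have 2: "measure \<nu> {..< -r} = max 0 (measure \<mu> {..< -r} - z)"
    using tendsto_unique trivial_limit_at_left_real by blast
  show ?thesis unfolding Tail_def 1 2 using assms(3,5) by (auto simp: shiftG_def)
qed


lemma shift_dist:
  assumes "real_distribution \<mu>" "(z::real) \<ge> 0"
  shows "real_distribution (interval_measure (shiftG (cdf \<mu>) z))"
    and "cdf (interval_measure (shiftG (cdf \<mu>) z)) = shiftG (cdf \<mu>) z"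
proof -
  interpret M: real_distribution \<mu> by fact
  let ?F = "cdf \<mu>" and ?G = "shiftG (cdf \<mu>) z"
  have mono: "?G x \<le> ?G y" if "x \<le> y" for x y
  proof -
    have "?F x \<le> ?F y" using that by (rule M.cdf_nondecreasing)
    moreover have "?F x \<le> 1" "0 \<le> ?F y" by (auto simp: M.cdf_bounded_prob M.cdf_nonneg)
    ultimately show ?thesis using that assms(2) unfolding shiftG_def by auto
  qed
  have rc: "continuous (at_right a) ?G" for a
  proof -
    have Fr: "(?F \<longlongrightarrow> ?F a) (at_right a)"
      using M.cdf_is_right_cont[of a] by (simp add: continuous_within)
    show ?thesis
    proof (cases "a < 0")
      case True
      have "((\<lambda>x. max 0 (?F x - z)) \<longlongrightarrow> max 0 (?F a - z)) (at_right a)"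
        by (intro tendsto_intros Fr)
      moreover have "eventually (\<lambda>x. max 0 (?F x - z) = ?G x) (at_right a)"
      proof (rule eventually_mono[OF eventually_at_right_real[of a 0]])
        fix x assume "x \<in> {a<..<0}"
        then show "max 0 (?F x - z) = ?G x" unfolding shiftG_def by simp
      qed (use True in simp)
      ultimately have "(?G \<longlongrightarrow> max 0 (?F a - z)) (at_right a)"
        by (rule tendsto_cong[THEN iffD1, rotated])
      then show ?thesis using True by (simp add: continuous_within shiftG_def)
    next
      case False
      have "((\<lambda>x. min 1 (?F x + z)) \<longlongrightarrow> min 1 (?F a + z)) (at_right a)"
        by (intro tendsto_intros Fr)
      moreover have "eventually (\<lambda>x. min 1 (?F x + z) = ?G x) (at_right a)"
      proof (rule eventually_mono[OF eventually_at_right_real[of a "a+1"]])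
        fix x assume "x \<in> {a<..<a+1}"
        then show "min 1 (?F x + z) = ?G x" using False unfolding shiftG_def by simp
      qed simp
      ultimately have "(?G \<longlongrightarrow> min 1 (?F a + z)) (at_right a)"
        by (rule tendsto_cong[THEN iffD1, rotated])
      then show ?thesis using False by (simp add: continuous_within shiftG_def)
    qed
  qed
  have bot: "(?G \<longlongrightarrow> 0) at_bot"
  proof -
    have "((\<lambda>x. max 0 (?F x - z)) \<longlongrightarrow> max 0 (0 - z)) at_bot"
      by (intro tendsto_intros M.cdf_lim_at_bot)
    then have "((\<lambda>x. max 0 (?F x - z)) \<longlongrightarrow> 0) at_bot" using assms(2) by simp
    moreover have "eventually (\<lambda>x. max 0 (?F x - z) = ?G x) at_bot"
      unfolding eventually_at_bot_dense by (intro exI[of _ 0]) (simp add: shiftG_def)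
    ultimately show ?thesis by (rule tendsto_cong[THEN iffD1, rotated])
  qed
  have top: "(?G \<longlongrightarrow> 1) at_top"
  proof -
    have "((\<lambda>x. min 1 (?F x + z)) \<longlongrightarrow> min 1 (1 + z)) at_top"
      by (intro tendsto_intros M.cdf_lim_at_top_prob)
    then have "((\<lambda>x. min 1 (?F x + z)) \<longlongrightarrow> 1) at_top" using assms(2) by simp
    moreover have "eventually (\<lambda>x. min 1 (?F x + z) = ?G x) at_top"
      unfolding eventually_at_top_linorder by (intro exI[of _ 0]) (simp add: shiftG_def)
    ultimately show ?thesis by (rule tendsto_cong[THEN iffD1, rotated])
  qed
  show "real_distribution (interval_measure ?G)"
    by (rule real_distribution_interval_measure[OF mono rc bot top])
  show "cdf (interval_measure ?G) = ?G"
    by (rule cdf_interval_measure[OF mono rc bot])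
qed

lemma shift_close:
  assumes "real_distribution \<mu>" "(z::real) \<ge> 0"
  shows "\<bar>cdf \<mu> x - shiftG (cdf \<mu>) z x\<bar> \<le> z"
proof -
  interpret M: real_distribution \<mu> by fact
  have "cdf \<mu> x \<le> 1" "0 \<le> cdf \<mu> x" by (auto simp: M.cdf_bounded_prob M.cdf_nonneg)
  then show ?thesis using assms(2) unfolding shiftG_def by auto
qed

lemma tail_lower:
  assumes "real_distribution \<eta>" "real_distribution \<mu>" "\<And>x. \<bar>cdf \<mu> x - cdf \<eta> x\<bar> \<le> d" "r \<ge> 0"
  shows "max 0 (1 - cdf \<mu> r - d) + max 0 (measure \<mu> {..< -r} - d) \<le> Tail \<eta> r"
proof -
  interpret N: real_distribution \<eta> by fact
  interpret M: real_distribution \<mu> by fact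
  have 1: "measure \<eta> {r<..} = 1 - cdf \<eta> r"
    using N.prob_compl[of "{..r}"] by (simp add: cdf_def Compl_eq_Diff_UNIV[symmetric] flip: Compl_atMost)
  have a: "1 - cdf \<mu> r - d \<le> measure \<eta> {r<..}" using assms(3)[of r] 1 by auto
  have b: "measure \<mu> {..< -r} - d \<le> measure \<eta> {..< -r}"
  proof -
    have "((\<lambda>x. cdf \<mu> x - d) \<longlongrightarrow> measure \<mu> {..< -r} - d) (at_left (-r))"
      by (intro tendsto_intros M.cdf_at_left)
    moreover have "eventually (\<lambda>x. cdf \<mu> x - d \<le> cdf \<eta> x) (at_left (-r))"
    proof (intro always_eventually allI)
      fix x show "cdf \<mu> x - d \<le> cdf \<eta> x" using assms(3)[of x] by (simp add: abs_le_iff)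
    qed
    ultimately show ?thesis
      using N.cdf_at_left trivial_limit_at_left_real tendsto_le by blast
  qed
  show ?thesis unfolding Tail_def using a b by (auto intro!: add_mono)
qed


theorem lemma25:
  fixes eps B :: real and \<mu> :: "real measure"
  assumes "eps > 0" and "B > 0"
    and "real_distribution \<mu>"
  shows "\<exists>z\<ge>0. \<exists>\<nu>\<in>moment_class eps B.
           cdf \<nu> = shiftG (cdf \<mu>) z \<and>
           (\<forall>\<eta>\<in>moment_class eps B.
              (SUP x. \<bar>cdf \<mu> x - cdf \<nu> x\<bar>) \<le> (SUP x. \<bar>cdf \<mu> x - cdf \<eta> x\<bar>))"
proof -
  interpret M: real_distribution \<mu> by fact
  define p where "p = 1 + eps"
  have p0: "p > 0" using assms(1) by (simp add: p_def)
  define F where "F = cdf \<mu>"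
  define Lm where "Lm a = measure \<mu> {..<a}" for a
  define T where "T z r = max 0 (1 - F r - z) + max 0 (Lm (-r) - z)" for z r
  define Mz where "Mz z = (\<integral>\<^sup>+s. ennreal (indicator {0..} s * T z (s powr (1/p))) \<partial>lborel)" for z
  define \<nu> where "\<nu> z = interval_measure (shiftG F z)" for z
  have F01: "0 \<le> F x" "F x \<le> 1" for x
    by (auto simp: F_def M.cdf_bounded_prob M.cdf_nonneg)
  have Lm01: "0 \<le> Lm x" "Lm x \<le> 1" for x by (auto simp: Lm_def)
  have nu_dist: "real_distribution (\<nu> z)" and nu_cdf: "cdf (\<nu> z) = shiftG F z" if "z \<ge> 0" for z
    using shift_dist[OF assms(3) that] by (auto simp: \<nu>_def F_def)
  have mom_nu: "(\<integral>\<^sup>+x. ennreal (\<bar>x\<bar> powr (1 + eps)) \<partial>\<nu> z) = Mz z" if "z \<ge> 0" for z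
  proof -
    have "(\<integral>\<^sup>+x. ennreal (\<bar>x\<bar> powr (1 + eps)) \<partial>\<nu> z) =
      (\<integral>\<^sup>+s. ennreal (indicator {0..} s * Tail (\<nu> z) (s powr (1/p))) \<partial>lborel)"
      using moment_tail[OF nu_dist[OF that] p0] by (simp add: p_def)
    also have "\<dots> = Mz z" unfolding Mz_def
    proof (rule nn_integral_cong)
      fix s :: real
      have "Tail (\<nu> z) (s powr (1/p)) = T z (s powr (1/p))"
        using tail_shift[OF nu_dist[OF that] assms(3) nu_cdf[OF that, unfolded F_def] that]
        by (simp add: T_def F_def Lm_def)
      then show "ennreal (indicator {0..} s * Tail (\<nu> z) (s powr (1/p))) =
                 ennreal (indicator {0..} s * T z (s powr (1/p)))" by simp
    qed
    finally show ?thesis .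
  qed
  have Mz_anti: "Mz z' \<le> Mz z" if "z \<le> z'" for z z'
    unfolding Mz_def using that
    by (intro nn_integral_mono ennreal_leI mult_left_mono) (auto simp: T_def)
  have lower: "Mz d \<le> ennreal B" if "\<eta> \<in> moment_class eps B" "\<And>x. \<bar>F x - cdf \<eta> x\<bar> \<le> d" for \<eta> d
  proof -
    have eta: "real_distribution \<eta>" using that(1) by (simp add: moment_class_def)
    have "Mz d \<le> (\<integral>\<^sup>+s. ennreal (indicator {0..} s * Tail \<eta> (s powr (1/p))) \<partial>lborel)"
      unfolding Mz_def
      using tail_lower[OF eta assms(3) that(2)[unfolded F_def]]
      by (intro nn_integral_mono ennreal_leI mult_left_mono) (auto simp: T_def F_def Lm_def)
    also have "\<dots> = (\<integral>\<^sup>+x. ennreal (\<bar>x\<bar> powr (1 + eps)) \<partial>\<eta>)"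
      using moment_tail[OF eta p0] by (simp add: p_def)
    also have "\<dots> \<le> ennreal B" using that(1) by (simp add: moment_class_def)
    finally show ?thesis .
  qed
  define S where "S = {z. 0 \<le> z \<and> Mz z \<le> ennreal B}"
  have "Mz 1 = 0" unfolding Mz_def using F01 Lm01
    by (intro nn_integral_zero') (auto simp: T_def intro!: always_eventually)
  then have "1 \<in> S" by (simp add: S_def)
  then have Sne: "S \<noteq> {}" by auto
  have Sbdd: "bdd_below S" unfolding S_def by (intro bdd_belowI[of _ 0]) auto
  define zs where "zs = Inf S"
  have zs0: "0 \<le> zs" unfolding zs_def using Sne by (intro cInf_greatest) (auto simp: S_def)
  have Mzs: "Mz zs \<le> ennreal B"
  proof -
    define zn where "zn n = zs + 1 / real (Suc n)" for n
    have zn_gt: "zs < zn n" for n by (simp add: zn_def)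
    have Mzn: "Mz (zn n) \<le> ennreal B" for n
    proof -
      obtain z' where "z' \<in> S" "z' < zn n"
        using cInf_lessD[OF Sne, of "zn n"] zn_gt[of n] by (auto simp: zs_def)
      then show ?thesis using Mz_anti[of z' "zn n"] by (auto simp: S_def)
    qed
    have zn_dec: "zn (Suc n) \<le> zn n" for n
      by (simp add: zn_def frac_le)
    have zn_lim: "zn \<longlonglongrightarrow> zs"
    proof -
      have "(\<lambda>n. zs + 1 / real (Suc n)) \<longlonglongrightarrow> zs + 0"
        by (intro tendsto_add tendsto_const LIMSEQ_Suc[OF lim_inverse_n'])
      then show ?thesis unfolding zn_def by simp
    qed
    define f where "f n s = ennreal (indicator {0..} s * T (zn n) (s powr (1/p)))" for n s
    have monoF: "mono F" unfolding F_def mono_def by (simp add: M.cdf_nondecreasing)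
    have monoL: "mono Lm" unfolding Lm_def mono_def
      by (auto intro!: M.finite_measure_mono)
    have [measurable]: "F \<in> borel_measurable borel" by (rule borel_measurable_mono[OF monoF])
    have [measurable]: "Lm \<in> borel_measurable borel" by (rule borel_measurable_mono[OF monoL])
    have meas: "f n \<in> borel_measurable lborel" for n
      unfolding f_def T_def by measurable
    have inc: "incseq f"
    proof (rule incseq_SucI, rule le_funI)
      fix n s show "f n s \<le> f (Suc n) s"
        unfolding f_def using zn_dec[of n]
        by (intro ennreal_leI mult_left_mono) (auto simp: T_def)
    qed
    have sup: "(SUP n. f n s) = ennreal (indicator {0..} s * T zs (s powr (1/p)))" for s
    proof -
      have "(\<lambda>n. f n s) \<longlonglongrightarrow> ennreal (indicator {0..} s * T zs (s powr (1/p)))"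
        unfolding f_def T_def by (intro tendsto_intros zn_lim)
      moreover have "(\<lambda>n. f n s) \<longlonglongrightarrow> (SUP n. f n s)"
        by (rule LIMSEQ_SUP) (use inc in \<open>auto simp: incseq_def le_fun_def\<close>)
      ultimately show ?thesis using LIMSEQ_unique by metis
    qed
    have "Mz zs = (\<integral>\<^sup>+s. (SUP n. f n s) \<partial>lborel)" unfolding Mz_def sup ..
    also have "\<dots> = (SUP n. integral\<^sup>N lborel (f n))"
      by (rule nn_integral_monotone_convergence_SUP[OF inc meas])
    also have "\<dots> \<le> ennreal B"
    proof (rule SUP_least)
      fix n have "integral\<^sup>N lborel (f n) = Mz (zn n)" unfolding Mz_def f_def ..
      then show "integral\<^sup>N lborel (f n) \<le> ennreal B" using Mzn[of n] by simp
    qed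
    finally show ?thesis .
  qed
  have close: "\<bar>F x - cdf (\<nu> zs) x\<bar> \<le> zs" for x
    using shift_close[OF assms(3) zs0, of x] by (simp add: nu_cdf[OF zs0] F_def)
  show ?thesis
  proof (intro exI[of _ zs] conjI zs0 bexI[of _ "\<nu> zs"] ballI)
    show "cdf (\<nu> zs) = shiftG (cdf \<mu>) zs" using nu_cdf[OF zs0] by (simp add: F_def)
    show "\<nu> zs \<in> moment_class eps B"
      using nu_dist[OF zs0] mom_nu[OF zs0] Mzs by (simp add: moment_class_def)
    fix \<eta> assume eta: "\<eta> \<in> moment_class eps B"
    then have etad: "real_distribution \<eta>" by (simp add: moment_class_def)
    interpret N: real_distribution \<eta> by fact
    define d where "d = (SUP x. \<bar>cdf \<mu> x - cdf \<eta> x\<bar>)"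
    have bdd: "bdd_above (range (\<lambda>x. \<bar>cdf \<mu> x - cdf \<eta> x\<bar>))"
    proof (intro bdd_aboveI[of _ 1])
      fix y assume "y \<in> range (\<lambda>x. \<bar>cdf \<mu> x - cdf \<eta> x\<bar>)"
      then obtain x where "y = \<bar>cdf \<mu> x - cdf \<eta> x\<bar>" by auto
      moreover have "0 \<le> cdf \<eta> x" "cdf \<eta> x \<le> 1" by (auto simp: N.cdf_bounded_prob N.cdf_nonneg)
      ultimately show "y \<le> 1" using F01[of x] by (auto simp: F_def)
    qed
    have dle: "\<bar>F x - cdf \<eta> x\<bar> \<le> d" for x
      unfolding d_def F_def by (rule cSUP_upper[OF _ bdd]) simp
    have d0: "0 \<le> d" using dle[of 0] by linarith
    have "d \<in> S" using lower[OF eta dle] d0 by (simp add: S_def)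
    then have "zs \<le> d" unfolding zs_def using Sbdd by (rule cInf_lower)
    have "(SUP x. \<bar>cdf \<mu> x - cdf (\<nu> zs) x\<bar>) \<le> zs"
      using close by (intro cSUP_least) (auto simp: F_def)
    also have "\<dots> \<le> d" by fact
    finally show "(SUP x. \<bar>cdf \<mu> x - cdf (\<nu> zs) x\<bar>) \<le> (SUP x. \<bar>cdf \<mu> x - cdf \<eta> x\<bar>)"
      by (simp add: d_def)
  qed
qed

end
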